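(* Let $R$ be a ring with unity, $N\geq 2$, and let $C$ be an $N$-complex of $R$-modules. Then $C$ is contractible if and only if $C$ is isomorphic to a direct sum (equivalently, product) of $N$-disks $\bigoplus_{n\in\mathbb{Z}} D^N_n(M_n)=\prod_{n\in\mathbb{Z}} D^N_n(M_n)$ for some family of $R$-modules $\{M_n\}_{n\in\mathbb{Z}}$. Moreover, in this case one can take $M_n={}_1Z_{n-(N-1)}(C)$.
   Context: An $N$-complex $X$ is a sequence of $R$-modules and maps $d_n:X_n\to X_{n-1}$ with any composite of $N$ consecutive maps equal to $0$. Chain maps are degreewise maps commuting with differentials. Two chain maps $f,g:X\to Y$ are chain homotopic if there are maps $s_n:X_n\to Y_{n+N-1}$ with $g_n-f_n=\sum_{i=0}^{N-1} d^{N-1-i}s_{n-i}d^i$ for all $n$; $C$ is contractible if $1_C$ is chain homotopic to $0$. For an $R$-module $M$, the disk $D^N_n(M)$ is the $N$-complex equal to $M$ in degrees $n,n-1,\dots,n-(N-1)$, joined by identity maps, and $0$ elsewhere. For an $N$-complex $X$, ${}_1Z_n(X)=\ker(d_n:X_n\to X_{n-1})$. *)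

theory Defs
  imports "HOL-Algebra.Ring" "HOL-Algebra.Module"
begin

text \<open>Left modules over an arbitrary (not necessarily commutative) ring with unity.
  (The library locale module requires a commutative ring, so we state the axioms directly.)\<close>
definition lmodule :: "('a, 'c) ring_scheme \<Rightarrow> ('a, 'b, 'd) module_scheme \<Rightarrow> bool" where
  "lmodule R M \<longleftrightarrow> ring R \<and> abelian_group M \<and>
     (\<forall>a\<in>carrier R. \<forall>x\<in>carrier M. a \<odot>\<^bsub>M\<^esub> x \<in> carrier M) \<and>
     (\<forall>a\<in>carrier R. \<forall>b\<in>carrier R. \<forall>x\<in>carrier M.
        (a \<oplus>\<^bsub>R\<^esub> b) \<odot>\<^bsub>M\<^esub> x = a \<odot>\<^bsub>M\<^esub> x \<oplus>\<^bsub>M\<^esub> b \<odot>\<^bsub>M\<^esub> x) \<and>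
     (\<forall>a\<in>carrier R. \<forall>x\<in>carrier M. \<forall>y\<in>carrier M.
        a \<odot>\<^bsub>M\<^esub> (x \<oplus>\<^bsub>M\<^esub> y) = a \<odot>\<^bsub>M\<^esub> x \<oplus>\<^bsub>M\<^esub> a \<odot>\<^bsub>M\<^esub> y) \<and>
     (\<forall>a\<in>carrier R. \<forall>b\<in>carrier R. \<forall>x\<in>carrier M.
        (a \<otimes>\<^bsub>R\<^esub> b) \<odot>\<^bsub>M\<^esub> x = a \<odot>\<^bsub>M\<^esub> (b \<odot>\<^bsub>M\<^esub> x)) \<and>
     (\<forall>x\<in>carrier M. \<one>\<^bsub>R\<^esub> \<odot>\<^bsub>M\<^esub> x = x)"

definition lin_map :: "('a, 'c) ring_scheme \<Rightarrow> ('a, 'b, 'd) module_scheme \<Rightarrow> ('a, 'e, 'f) module_scheme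
    \<Rightarrow> ('b \<Rightarrow> 'e) \<Rightarrow> bool" where
  "lin_map R M N f \<longleftrightarrow> (\<forall>x\<in>carrier M. f x \<in> carrier N) \<and>
     (\<forall>x\<in>carrier M. \<forall>y\<in>carrier M. f (x \<oplus>\<^bsub>M\<^esub> y) = f x \<oplus>\<^bsub>N\<^esub> f y) \<and>
     (\<forall>a\<in>carrier R. \<forall>x\<in>carrier M. f (a \<odot>\<^bsub>M\<^esub> x) = a \<odot>\<^bsub>N\<^esub> f x)"

text \<open>An N-complex is given by modules X n (n :: int) and differentials d n : X n -> X (n-1).
  dpow d k n is the k-fold composite d (n-k+1) o ... o d n : X n -> X (n-k).\<close>
fun dpow :: "(int \<Rightarrow> 'b \<Rightarrow> 'b) \<Rightarrow> nat \<Rightarrow> int \<Rightarrow> 'b \<Rightarrow> 'b" where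
  "dpow d 0 n = id"
| "dpow d (Suc k) n = d (n - int k) \<circ> dpow d k n"

definition ncomplex :: "('a, 'c) ring_scheme \<Rightarrow> nat \<Rightarrow> (int \<Rightarrow> ('a, 'b, 'd) module_scheme)
    \<Rightarrow> (int \<Rightarrow> 'b \<Rightarrow> 'b) \<Rightarrow> bool" where
  "ncomplex R N X d \<longleftrightarrow> (\<forall>n. lmodule R (X n)) \<and> (\<forall>n. lin_map R (X n) (X (n - 1)) (d n)) \<and>
     (\<forall>n. \<forall>x\<in>carrier (X n). dpow d N n x = \<zero>\<^bsub>X (n - int N)\<^esub>)"

definition chain_map :: "('a, 'c) ring_scheme \<Rightarrow> (int \<Rightarrow> ('a, 'b, 'd) module_scheme) \<Rightarrow> (int \<Rightarrow> 'b \<Rightarrow> 'b)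
    \<Rightarrow> (int \<Rightarrow> ('a, 'e, 'f) module_scheme) \<Rightarrow> (int \<Rightarrow> 'e \<Rightarrow> 'e) \<Rightarrow> (int \<Rightarrow> 'b \<Rightarrow> 'e) \<Rightarrow> bool" where
  "chain_map R X dX Y dY f \<longleftrightarrow> (\<forall>n. lin_map R (X n) (Y n) (f n)) \<and>
     (\<forall>n. \<forall>x\<in>carrier (X n). f (n - 1) (dX n x) = dY n (f n x))"

definition chain_homotopic :: "('a, 'c) ring_scheme \<Rightarrow> nat \<Rightarrow> (int \<Rightarrow> ('a, 'b, 'd) module_scheme)
    \<Rightarrow> (int \<Rightarrow> 'b \<Rightarrow> 'b) \<Rightarrow> (int \<Rightarrow> ('a, 'e, 'f) module_scheme) \<Rightarrow> (int \<Rightarrow> 'e \<Rightarrow> 'e)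
    \<Rightarrow> (int \<Rightarrow> 'b \<Rightarrow> 'e) \<Rightarrow> (int \<Rightarrow> 'b \<Rightarrow> 'e) \<Rightarrow> bool" where
  "chain_homotopic R N X dX Y dY f g \<longleftrightarrow>
     chain_map R X dX Y dY f \<and> chain_map R X dX Y dY g \<and>
     (\<exists>s. (\<forall>n. lin_map R (X n) (Y (n + int N - 1)) (s n)) \<and>
       (\<forall>n. \<forall>x\<in>carrier (X n).
          g n x \<ominus>\<^bsub>Y n\<^esub> f n x =
          finsum (Y n) (\<lambda>i. dpow dY (N - 1 - i) (n - int i + int N - 1) (s (n - int i) (dpow dX i n x)))
            {0..<N}))"

definition contractible :: "('a, 'c) ring_scheme \<Rightarrow> nat \<Rightarrow> (int \<Rightarrow> ('a, 'b, 'd) module_scheme)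
    \<Rightarrow> (int \<Rightarrow> 'b \<Rightarrow> 'b) \<Rightarrow> bool" where
  "contractible R N X d \<longleftrightarrow> chain_homotopic R N X d X d (\<lambda>n x. x) (\<lambda>n x. \<zero>\<^bsub>X n\<^esub>)"

definition ncomplex_iso :: "('a, 'c) ring_scheme \<Rightarrow> (int \<Rightarrow> ('a, 'b, 'd) module_scheme) \<Rightarrow> (int \<Rightarrow> 'b \<Rightarrow> 'b)
    \<Rightarrow> (int \<Rightarrow> ('a, 'e, 'f) module_scheme) \<Rightarrow> (int \<Rightarrow> 'e \<Rightarrow> 'e) \<Rightarrow> bool" where
  "ncomplex_iso R X dX Y dY \<longleftrightarrow>
     (\<exists>f. chain_map R X dX Y dY f \<and> (\<forall>n. bij_betw (f n) (carrier (X n)) (carrier (Y n))))"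

text \<open>The N-complex (direct sum = product) of the disks D^N_n(M n), n :: int.
  In degree k it is the (finite) direct sum of the M n with k <= n <= k+N-1, represented by
  functions on int supported in {k..k+N-1}; the differential is the identity on the components
  n with k <= n <= k+N-2 and zero on the component n = k+N-1 (which is absent in degree k-1).\<close>
definition disk_deg :: "nat \<Rightarrow> (int \<Rightarrow> ('a, 'b, 'd) module_scheme) \<Rightarrow> int \<Rightarrow> ('a, int \<Rightarrow> 'b) module" where
  "disk_deg N M k = \<lparr> carrier = {f. (\<forall>j\<in>{k..k + int N - 1}. f j \<in> carrier (M j)) \<and>
                                    (\<forall>j. j \<notin> {k..k + int N - 1} \<longrightarrow> f j = undefined)},
     mult = (\<lambda>f g. undefined), one = undefined,
     zero = (\<lambda>j. if j \<in> {k..k + int N - 1} then \<zero>\<^bsub>M j\<^esub> else undefined),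
     add = (\<lambda>f g j. if j \<in> {k..k + int N - 1} then f j \<oplus>\<^bsub>M j\<^esub> g j else undefined),
     smult = (\<lambda>a f j. if j \<in> {k..k + int N - 1} then a \<odot>\<^bsub>M j\<^esub> f j else undefined) \<rparr>"

definition disk_diff :: "nat \<Rightarrow> (int \<Rightarrow> ('a, 'b, 'd) module_scheme) \<Rightarrow> int \<Rightarrow> (int \<Rightarrow> 'b) \<Rightarrow> (int \<Rightarrow> 'b)" where
  "disk_diff N M k f = (\<lambda>j. if j \<in> {k..k + int N - 2} then f j
                            else if j = k - 1 then \<zero>\<^bsub>M j\<^esub> else undefined)"

definition cycles1 :: "(int \<Rightarrow> ('a, 'b, 'd) module_scheme) \<Rightarrow> (int \<Rightarrow> 'b \<Rightarrow> 'b) \<Rightarrow> int \<Rightarrow> ('a, 'b, 'd) module_scheme" where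
  "cycles1 X d n = (X n)\<lparr>carrier := {x \<in> carrier (X n). d n x = \<zero>\<^bsub>X (n - 1)\<^esub>}\<rparr>"

end

theory Submission
  imports Defs
begin


lemma lmod_ag: "lmodule R M \<Longrightarrow> abelian_group M" by (simp add: lmodule_def)
lemma lmod_ring: "lmodule R M \<Longrightarrow> ring R" by (simp add: lmodule_def)
lemma lmod_smult_closed: "lmodule R M \<Longrightarrow> a \<in> carrier R \<Longrightarrow> x \<in> carrier M \<Longrightarrow> a \<odot>\<^bsub>M\<^esub> x \<in> carrier M"
  by (simp add: lmodule_def)
lemma lmod_smult_add: "lmodule R M \<Longrightarrow> a \<in> carrier R \<Longrightarrow> x \<in> carrier M \<Longrightarrow> y \<in> carrier M \<Longrightarrow>
   a \<odot>\<^bsub>M\<^esub> (x \<oplus>\<^bsub>M\<^esub> y) = a \<odot>\<^bsub>M\<^esub> x \<oplus>\<^bsub>M\<^esub> a \<odot>\<^bsub>M\<^esub> y"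
  by (simp add: lmodule_def)

lemma lmod_smult_zero:
  assumes "lmodule R M" "a \<in> carrier R"
  shows "a \<odot>\<^bsub>M\<^esub> \<zero>\<^bsub>M\<^esub> = \<zero>\<^bsub>M\<^esub>"
proof -
  interpret abelian_group M using assms lmod_ag by blast
  have c: "a \<odot>\<^bsub>M\<^esub> \<zero>\<^bsub>M\<^esub> \<in> carrier M" using lmod_smult_closed[OF assms zero_closed] .
  have "a \<odot>\<^bsub>M\<^esub> \<zero>\<^bsub>M\<^esub> = a \<odot>\<^bsub>M\<^esub> (\<zero>\<^bsub>M\<^esub> \<oplus>\<^bsub>M\<^esub> \<zero>\<^bsub>M\<^esub>)" by simp
  also have "\<dots> = a \<odot>\<^bsub>M\<^esub> \<zero>\<^bsub>M\<^esub> \<oplus>\<^bsub>M\<^esub> a \<odot>\<^bsub>M\<^esub> \<zero>\<^bsub>M\<^esub>" using lmod_smult_add[OF assms zero_closed zero_closed] .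
  finally have "a \<odot>\<^bsub>M\<^esub> \<zero>\<^bsub>M\<^esub> = a \<odot>\<^bsub>M\<^esub> \<zero>\<^bsub>M\<^esub> \<oplus>\<^bsub>M\<^esub> a \<odot>\<^bsub>M\<^esub> \<zero>\<^bsub>M\<^esub>" .
  then show ?thesis using add.l_cancel_one'[OF c c] by simp
qed

lemma lmod_smult_neg:
  assumes "lmodule R M" "a \<in> carrier R" "x \<in> carrier M"
  shows "a \<odot>\<^bsub>M\<^esub> (\<ominus>\<^bsub>M\<^esub> x) = \<ominus>\<^bsub>M\<^esub> (a \<odot>\<^bsub>M\<^esub> x)"
proof -
  interpret abelian_group M using assms lmod_ag by blast
  have "a \<odot>\<^bsub>M\<^esub> (\<ominus>\<^bsub>M\<^esub> x) \<oplus>\<^bsub>M\<^esub> a \<odot>\<^bsub>M\<^esub> x = a \<odot>\<^bsub>M\<^esub> (\<ominus>\<^bsub>M\<^esub> x \<oplus>\<^bsub>M\<^esub> x)"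
    using lmod_smult_add[OF assms(1,2) a_inv_closed[OF assms(3)] assms(3)] by simp
  also have "\<dots> = \<zero>\<^bsub>M\<^esub>" using lmod_smult_zero[OF assms(1,2)] l_neg[OF assms(3)] by simp
  finally have e: "a \<odot>\<^bsub>M\<^esub> (\<ominus>\<^bsub>M\<^esub> x) \<oplus>\<^bsub>M\<^esub> a \<odot>\<^bsub>M\<^esub> x = \<zero>\<^bsub>M\<^esub>" .
  show ?thesis using minus_equality[OF e lmod_smult_closed[OF assms] lmod_smult_closed[OF assms(1,2) a_inv_closed[OF assms(3)]]] by simp
qed

lemma lin_mapD:
  "lin_map R M N f \<Longrightarrow> x \<in> carrier M \<Longrightarrow> f x \<in> carrier N"
  "lin_map R M N f \<Longrightarrow> x \<in> carrier M \<Longrightarrow> y \<in> carrier M \<Longrightarrow> f (x \<oplus>\<^bsub>M\<^esub> y) = f x \<oplus>\<^bsub>N\<^esub> f y"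
  "lin_map R M N f \<Longrightarrow> a \<in> carrier R \<Longrightarrow> x \<in> carrier M \<Longrightarrow> f (a \<odot>\<^bsub>M\<^esub> x) = a \<odot>\<^bsub>N\<^esub> f x"
  by (auto simp: lin_map_def)

lemma lin_map_zero:
  assumes "abelian_group M" "abelian_group N" "lin_map R M N f"
  shows "f \<zero>\<^bsub>M\<^esub> = \<zero>\<^bsub>N\<^esub>"
proof -
  interpret M: abelian_group M by fact
  interpret N: abelian_group N by fact
  have c: "f \<zero>\<^bsub>M\<^esub> \<in> carrier N" using lin_mapD(1)[OF assms(3) M.zero_closed] .
  have "f \<zero>\<^bsub>M\<^esub> = f \<zero>\<^bsub>M\<^esub> \<oplus>\<^bsub>N\<^esub> f \<zero>\<^bsub>M\<^esub>"
    using lin_mapD(2)[OF assms(3), of "\<zero>\<^bsub>M\<^esub>" "\<zero>\<^bsub>M\<^esub>"] by simp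
  then show ?thesis using N.add.l_cancel_one'[OF c c] by simp
qed

lemma lin_map_neg:
  assumes "abelian_group M" "abelian_group N" "lin_map R M N f" "x \<in> carrier M"
  shows "f (\<ominus>\<^bsub>M\<^esub> x) = \<ominus>\<^bsub>N\<^esub> f x"
proof -
  interpret M: abelian_group M by fact
  interpret N: abelian_group N by fact
  have "f (\<ominus>\<^bsub>M\<^esub> x) \<oplus>\<^bsub>N\<^esub> f x = f (\<ominus>\<^bsub>M\<^esub> x \<oplus>\<^bsub>M\<^esub> x)"
    using lin_mapD(2)[OF assms(3) M.a_inv_closed[OF assms(4)] assms(4)] by simp
  also have "\<dots> = \<zero>\<^bsub>N\<^esub>" using M.l_neg[OF assms(4)] lin_map_zero[OF assms(1-3)] by simp
  finally have e: "f (\<ominus>\<^bsub>M\<^esub> x) \<oplus>\<^bsub>N\<^esub> f x = \<zero>\<^bsub>N\<^esub>" .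
  show ?thesis using N.minus_equality[OF e lin_mapD(1)[OF assms(3) assms(4)] lin_mapD(1)[OF assms(3) M.a_inv_closed[OF assms(4)]]] by simp
qed

lemma lin_map_minus:
  assumes "abelian_group M" "abelian_group N" "lin_map R M N f" "x \<in> carrier M" "y \<in> carrier M"
  shows "f (x \<ominus>\<^bsub>M\<^esub> y) = f x \<ominus>\<^bsub>N\<^esub> f y"
  using lin_map_neg[OF assms(1-3) assms(5)] lin_mapD(2)[OF assms(3) assms(4) abelian_group.a_inv_closed[OF assms(1) assms(5)]]
  by (simp add: a_minus_def)

lemma add_hom_finsum:
  assumes "abelian_group M" "abelian_group N" and cl: "\<And>x. x \<in> carrier M \<Longrightarrow> f x \<in> carrier N"
    and ad: "\<And>x y. x \<in> carrier M \<Longrightarrow> y \<in> carrier M \<Longrightarrow> f (x \<oplus>\<^bsub>M\<^esub> y) = f x \<oplus>\<^bsub>N\<^esub> f y"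
    and z: "f \<zero>\<^bsub>M\<^esub> = \<zero>\<^bsub>N\<^esub>"
    and "finite I" "g \<in> I \<rightarrow> carrier M"
  shows "f (finsum M g I) = finsum N (\<lambda>i. f (g i)) I"
  using assms(6,7)
proof (induction I rule: finite_induct)
  case empty
  interpret M: abelian_group M by fact
  interpret N: abelian_group N by fact
  show ?case using z by simp
next
  case (insert i I)
  interpret M: abelian_group M by fact
  interpret N: abelian_group N by fact
  have g: "g \<in> I \<rightarrow> carrier M" "g i \<in> carrier M" using insert by auto
  have "f (finsum M g (insert i I)) = f (g i \<oplus>\<^bsub>M\<^esub> finsum M g I)"
    using insert g by (simp add: M.finsum_insert)
  also have "\<dots> = f (g i) \<oplus>\<^bsub>N\<^esub> finsum N (\<lambda>i. f (g i)) I"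
    using ad g M.finsum_closed insert by simp
  also have "\<dots> = finsum N (\<lambda>i. f (g i)) (insert i I)"
    using insert g cl by (subst N.finsum_insert) (auto simp: Pi_def)
  finally show ?case .
qed

lemma lin_map_finsum:
  assumes "abelian_group M" "abelian_group N" "lin_map R M N f" "finite I" "g \<in> I \<rightarrow> carrier M"
  shows "f (finsum M g I) = finsum N (\<lambda>i. f (g i)) I"
  by (rule add_hom_finsum[where f=f and M=M and N=N, OF assms(1,2) lin_mapD(1)[OF assms(3)]
     lin_mapD(2)[OF assms(3)] lin_map_zero[OF assms(1-3)] assms(4,5)])

lemma smult_finsum:
  assumes "lmodule R M" "a \<in> carrier R" "finite I" "g \<in> I \<rightarrow> carrier M"
  shows "a \<odot>\<^bsub>M\<^esub> finsum M g I = finsum M (\<lambda>i. a \<odot>\<^bsub>M\<^esub> g i) I"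
  by (rule add_hom_finsum[OF lmod_ag[OF assms(1)] lmod_ag[OF assms(1)], of "\<lambda>x. a \<odot>\<^bsub>M\<^esub> x",
     OF lmod_smult_closed[OF assms(1,2)] lmod_smult_add[OF assms(1,2)] lmod_smult_zero[OF assms(1,2)] assms(3,4)])

lemma finsum_single:
  assumes "abelian_group G" "finite I" "i0 \<in> I" "f \<in> I \<rightarrow> carrier G"
    "\<And>i. i \<in> I \<Longrightarrow> i \<noteq> i0 \<Longrightarrow> f i = \<zero>\<^bsub>G\<^esub>"
  shows "finsum G f I = f i0"
proof -
  interpret abelian_group G by fact
  have "finsum G f I = finsum G (\<lambda>j. if i0 = j then f j else \<zero>\<^bsub>G\<^esub>) I"
    apply (rule finsum_cong)
      apply simp
    using assms(4) apply (auto simp: Pi_def)[1]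
    using assms(5) by (auto simp: simp_implies_def)
  also have "\<dots> = f i0" using finsum_singleton[OF assms(3,2,4)] .
  finally show ?thesis .
qed

lemma lin_map_comp:
  "lin_map R M N f \<Longrightarrow> lin_map R N P g \<Longrightarrow> lin_map R M P (\<lambda>x. g (f x))"
  by (simp add: lin_map_def lmodule_def)

lemma lin_map_id: "lmodule R M \<Longrightarrow> lin_map R M M (\<lambda>x. x)"
  by (simp add: lin_map_def)

lemma lin_map_zero_map: "lmodule R M \<Longrightarrow> lmodule R N \<Longrightarrow> lin_map R M N (\<lambda>x. \<zero>\<^bsub>N\<^esub>)"
  unfolding lin_map_def
  using lmod_smult_zero[of R N] abelian_groupE(2,5)[OF lmod_ag[of R N]] by auto

lemma lin_map_negf:
  assumes "lmodule R M" "lmodule R N" "lin_map R M N f"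
  shows "lin_map R M N (\<lambda>x. \<ominus>\<^bsub>N\<^esub> f x)"
proof -
  interpret N: abelian_group N using assms lmod_ag by blast
  show ?thesis unfolding lin_map_def
  proof (intro conjI ballI)
    fix x assume "x \<in> carrier M" then show "\<ominus>\<^bsub>N\<^esub> f x \<in> carrier N" using lin_mapD(1)[OF assms(3)] by simp
  next
    fix x y assume xy: "x \<in> carrier M" "y \<in> carrier M"
    then have c: "f x \<in> carrier N" "f y \<in> carrier N" using lin_mapD(1)[OF assms(3)] by auto
    show "\<ominus>\<^bsub>N\<^esub> f (x \<oplus>\<^bsub>M\<^esub> y) = \<ominus>\<^bsub>N\<^esub> f x \<oplus>\<^bsub>N\<^esub> \<ominus>\<^bsub>N\<^esub> f y"
      using lin_mapD(2)[OF assms(3) xy] N.minus_add[OF c] by simp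
  next
    fix a x assume ax: "a \<in> carrier R" "x \<in> carrier M"
    show "\<ominus>\<^bsub>N\<^esub> f (a \<odot>\<^bsub>M\<^esub> x) = a \<odot>\<^bsub>N\<^esub> \<ominus>\<^bsub>N\<^esub> f x"
      using lin_mapD(3)[OF assms(3) ax] lmod_smult_neg[OF assms(2) ax(1) lin_mapD(1)[OF assms(3) ax(2)]] by simp
  qed
qed

lemma lin_map_inv:
  assumes "lmodule R M" "lmodule R N" "lin_map R M N f" "bij_betw f (carrier M) (carrier N)"
  shows "lin_map R N M (inv_into (carrier M) f)"
proof -
  interpret M: abelian_group M using assms lmod_ag by blast
  interpret N: abelian_group N using assms lmod_ag by blast
  let ?g = "inv_into (carrier M) f"
  have im: "f ` carrier M = carrier N" using assms(4) by (simp add: bij_betw_def)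
  have g1: "?g y \<in> carrier M" if "y \<in> carrier N" for y
    by (rule inv_into_into) (use im that in simp)
  have g2: "f (?g y) = y" if "y \<in> carrier N" for y
    by (rule f_inv_into_f) (use im that in simp)
  have inj: "inj_on f (carrier M)" using assms(4) bij_betw_def by blast
  have eq: "\<And>u v. u \<in> carrier M \<Longrightarrow> v \<in> carrier M \<Longrightarrow> f u = f v \<Longrightarrow> u = v"
    using inj_onD[OF inj] by blast
  show ?thesis unfolding lin_map_def
  proof (intro conjI ballI)
    fix x assume "x \<in> carrier N" then show "?g x \<in> carrier M" using g1 by blast
  next
    fix x y assume xy: "x \<in> carrier N" "y \<in> carrier N"
    have "f (?g x \<oplus>\<^bsub>M\<^esub> ?g y) = x \<oplus>\<^bsub>N\<^esub> y"
      using lin_mapD(2)[OF assms(3) g1 g1, OF xy] g2 xy by simp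
    moreover have "f (?g (x \<oplus>\<^bsub>N\<^esub> y)) = x \<oplus>\<^bsub>N\<^esub> y" using g2 xy by simp
    ultimately show "?g (x \<oplus>\<^bsub>N\<^esub> y) = ?g x \<oplus>\<^bsub>M\<^esub> ?g y"
      using eq g1 xy by simp
  next
    fix a x assume ax: "a \<in> carrier R" "x \<in> carrier N"
    have "f (a \<odot>\<^bsub>M\<^esub> ?g x) = a \<odot>\<^bsub>N\<^esub> x" using lin_mapD(3)[OF assms(3) ax(1) g1[OF ax(2)]] g2 ax by simp
    moreover have "f (?g (a \<odot>\<^bsub>N\<^esub> x)) = a \<odot>\<^bsub>N\<^esub> x" using g2 ax lmod_smult_closed[OF assms(2)] by blast
    ultimately show "?g (a \<odot>\<^bsub>N\<^esub> x) = a \<odot>\<^bsub>M\<^esub> ?g x"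
      using eq g1 ax lmod_smult_closed[OF assms(2)] lmod_smult_closed[OF assms(1)] by simp
  qed
qed



lemma dpow_Suc': "dpow d (Suc k) n x = dpow d k (n - 1) (d n x)"
proof (induction k)
  case 0 then show ?case by simp
next
  case (Suc k)
  have e: "n - int (Suc k) = n - 1 - int k" by simp
  show ?case using Suc by (simp only: dpow.simps o_apply e)
qed

lemma dpow_add: "dpow d (a + b) n x = dpow d b (n - int a) (dpow d a n x)"
proof (induction b)
  case 0 then show ?case by simp
next
  case (Suc b)
  have e: "n - int (a + b) = n - int a - int b" by simp
  show ?case using Suc by (simp only: add_Suc_right dpow.simps o_apply e)
qed

lemma dpow_closed_gen:
  assumes "\<And>n x. x \<in> carrier (X n) \<Longrightarrow> d n x \<in> carrier (X (n - 1))" "x \<in> carrier (X n)"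
  shows "dpow d t n x \<in> carrier (X (n - int t))"
proof (induction t)
  case 0 then show ?case using assms by simp
next
  case (Suc t)
  have e: "n - int (Suc t) = n - int t - 1" by simp
  show ?case unfolding e dpow.simps o_apply using assms(1)[OF Suc] .
qed

lemma chain_map_dpow:
  assumes "chain_map R X dX Y dY f" "\<And>n x. x \<in> carrier (X n) \<Longrightarrow> dX n x \<in> carrier (X (n - 1))"
    "x \<in> carrier (X n)"
  shows "f (n - int t) (dpow dX t n x) = dpow dY t n (f n x)"
proof (induction t)
  case 0 then show ?case by simp
next
  case (Suc t)
  have e: "n - int (Suc t) = n - int t - 1" by simp
  have c: "dpow dX t n x \<in> carrier (X (n - int t))" using dpow_closed_gen[of X dX, OF assms(2,3)] .
  have "f (n - int t - 1) (dX (n - int t) (dpow dX t n x)) = dY (n - int t) (f (n - int t) (dpow dX t n x))"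
    using assms(1) c unfolding chain_map_def by blast
  then show ?case unfolding e dpow.simps o_apply Suc .
qed

lemma chain_iso_inv:
  assumes X: "\<And>n. lmodule R (X n)" and Y: "\<And>n. lmodule R (Y n)"
    and f: "chain_map R X dX Y dY f" and b: "\<And>n. bij_betw (f n) (carrier (X n)) (carrier (Y n))"
    and dX: "\<And>n x. x \<in> carrier (X n) \<Longrightarrow> dX n x \<in> carrier (X (n - 1))"
    and dY: "\<And>n x. x \<in> carrier (Y n) \<Longrightarrow> dY n x \<in> carrier (Y (n - 1))"
  shows "chain_map R Y dY X dX (\<lambda>n. inv_into (carrier (X n)) (f n))"
    and "\<And>n. bij_betw (inv_into (carrier (X n)) (f n)) (carrier (Y n)) (carrier (X n))"
proof -
  let ?g = "\<lambda>n. inv_into (carrier (X n)) (f n)"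
  have lf: "lin_map R (X n) (Y n) (f n)" for n using f unfolding chain_map_def by blast
  have im: "f n ` carrier (X n) = carrier (Y n)" for n using b by (simp add: bij_betw_def)
  have g1: "?g n y \<in> carrier (X n)" if "y \<in> carrier (Y n)" for n y
    by (rule inv_into_into) (use im that in simp)
  have g2: "f n (?g n y) = y" if "y \<in> carrier (Y n)" for n y
    by (rule f_inv_into_f) (use im that in simp)
  have inj: "inj_on (f n) (carrier (X n))" for n using b bij_betw_def by blast
  show "bij_betw (?g n) (carrier (Y n)) (carrier (X n))" for n using b bij_betw_inv_into by blast
  show "chain_map R Y dY X dX ?g"
    unfolding chain_map_def
  proof (intro conjI allI ballI)
    fix n show "lin_map R (Y n) (X n) (?g n)" using lin_map_inv[OF X Y lf b] .
  next
    fix n y assume y: "y \<in> carrier (Y n)"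
    have a1: "?g (n - 1) (dY n y) \<in> carrier (X (n - 1))" using g1 dY y by blast
    have a2: "dX n (?g n y) \<in> carrier (X (n - 1))" using dX g1 y by blast
    have "f (n - 1) (dX n (?g n y)) = dY n (f n (?g n y))" using f g1[OF y] unfolding chain_map_def by blast
    also have "\<dots> = dY n y" using g2 y by simp
    also have "\<dots> = f (n - 1) (?g (n - 1) (dY n y))" using g2 dY y by simp
    finally have "f (n - 1) (?g (n - 1) (dY n y)) = f (n - 1) (dX n (?g n y))" by simp
    then show "?g (n - 1) (dY n y) = dX n (?g n y)" using inj_onD[OF inj _ a1 a2] by blast
  qed
qed

locale cx =
  fixes R :: "('a, 'r) ring_scheme" and X :: "int \<Rightarrow> ('a, 'b, 'm) module_scheme" and d :: "int \<Rightarrow> 'b \<Rightarrow> 'b"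
  assumes lm: "\<And>n. lmodule R (X n)" and dl: "\<And>n. lin_map R (X n) (X (n - 1)) (d n)"
begin

lemma ag: "abelian_group (X n)" using lm lmod_ag by blast

lemma dcl: "x \<in> carrier (X n) \<Longrightarrow> d n x \<in> carrier (X (n - 1))" using lin_mapD(1)[OF dl] .

lemma dpow_closed: "x \<in> carrier (X n) \<Longrightarrow> p = n - int t \<Longrightarrow> dpow d t n x \<in> carrier (X p)"
  using dpow_closed_gen[of X d, OF dcl] by blast

lemma dpow_lin: "lin_map R (X n) (X (n - int t)) (dpow d t n)"
proof (induction t)
  case 0 then show ?case using lin_map_id[OF lm] by (simp add: id_def)
next
  case (Suc t)
  have e: "n - int (Suc t) = n - int t - 1" by simp
  show ?case unfolding e dpow.simps o_def using lin_map_comp[OF Suc dl] .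
qed

lemma dpow_lin': "p = n - int t \<Longrightarrow> lin_map R (X n) (X p) (dpow d t n)"
  using dpow_lin by blast

lemma dpow_zero: "p = n - int t \<Longrightarrow> dpow d t n \<zero>\<^bsub>X n\<^esub> = \<zero>\<^bsub>X p\<^esub>"
  using lin_map_zero[OF ag ag dpow_lin] by blast

end

locale ncx = cx +
  fixes N :: nat
  assumes nil: "\<And>n x. x \<in> carrier (X n) \<Longrightarrow> dpow d N n x = \<zero>\<^bsub>X (n - int N)\<^esub>"
begin

lemma dpow_ge: "N \<le> t \<Longrightarrow> x \<in> carrier (X n) \<Longrightarrow> p = n - int t \<Longrightarrow> dpow d t n x = \<zero>\<^bsub>X p\<^esub>"
proof -
  assume a: "N \<le> t" "x \<in> carrier (X n)" "p = n - int t"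
  obtain k where k: "t = N + k" using a(1) le_Suc_ex by blast
  have "dpow d t n x = dpow d k (n - int N) (dpow d N n x)" unfolding k dpow_add ..
  also have "\<dots> = dpow d k (n - int N) \<zero>\<^bsub>X (n - int N)\<^esub>" using nil[OF a(2)] by simp
  also have "\<dots> = \<zero>\<^bsub>X p\<^esub>" by (rule dpow_zero) (use a(3) k in simp)
  finally show ?thesis .
qed

end



locale dsk =
  fixes R :: "('a, 'r) ring_scheme" and N :: nat and M :: "int \<Rightarrow> ('a, 'b, 'm) module_scheme"
  assumes lmM: "\<And>j. lmodule R (M j)" and N2: "N \<ge> 2"
begin

abbreviation "D \<equiv> disk_deg N M"
abbreviation "dd \<equiv> disk_diff N M"

lemma agM: "abelian_group (M j)" using lmod_ag[OF lmM] .

lemma Dcar: "f \<in> carrier (D k) \<longleftrightarrow> (\<forall>j\<in>{k..k + int N - 1}. f j \<in> carrier (M j)) \<and>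
     (\<forall>j. j \<notin> {k..k + int N - 1} \<longrightarrow> f j = undefined)"
  by (simp add: disk_deg_def)

lemma Dzero: "\<zero>\<^bsub>D k\<^esub> = (\<lambda>j. if j \<in> {k..k + int N - 1} then \<zero>\<^bsub>M j\<^esub> else undefined)"
  by (simp add: disk_deg_def)
lemma Dadd: "x \<oplus>\<^bsub>D k\<^esub> y = (\<lambda>j. if j \<in> {k..k + int N - 1} then x j \<oplus>\<^bsub>M j\<^esub> y j else undefined)"
  by (simp add: disk_deg_def)
lemma Dsmult: "a \<odot>\<^bsub>D k\<^esub> y = (\<lambda>j. if j \<in> {k..k + int N - 1} then a \<odot>\<^bsub>M j\<^esub> y j else undefined)"
  by (simp add: disk_deg_def)

lemma Dext: "x \<in> carrier (D k) \<Longrightarrow> y \<in> carrier (D k) \<Longrightarrow> (\<And>j. j \<in> {k..k + int N - 1} \<Longrightarrow> x j = y j) \<Longrightarrow> x = y"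
  unfolding Dcar by (metis ext)

lemma D_ag: "abelian_group (D k)"
proof (rule abelian_groupI)
  fix x y assume "x \<in> carrier (D k)" "y \<in> carrier (D k)"
  then show "x \<oplus>\<^bsub>D k\<^esub> y \<in> carrier (D k)"
    unfolding Dcar Dadd using abelian_groupE(1)[OF agM] by simp
next
  show "\<zero>\<^bsub>D k\<^esub> \<in> carrier (D k)" unfolding Dcar Dzero using abelian_groupE(2)[OF agM] by simp
next
  fix x y z assume "x \<in> carrier (D k)" "y \<in> carrier (D k)" "z \<in> carrier (D k)"
  then show "x \<oplus>\<^bsub>D k\<^esub> y \<oplus>\<^bsub>D k\<^esub> z = x \<oplus>\<^bsub>D k\<^esub> (y \<oplus>\<^bsub>D k\<^esub> z)"
    unfolding Dcar Dadd using abelian_groupE(3)[OF agM] by (simp add: fun_eq_iff)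
next
  fix x y assume "x \<in> carrier (D k)" "y \<in> carrier (D k)"
  then show "x \<oplus>\<^bsub>D k\<^esub> y = y \<oplus>\<^bsub>D k\<^esub> x"
    unfolding Dcar Dadd using abelian_groupE(4)[OF agM] by (simp add: fun_eq_iff)
next
  fix x assume "x \<in> carrier (D k)"
  then show "\<zero>\<^bsub>D k\<^esub> \<oplus>\<^bsub>D k\<^esub> x = x"
    unfolding Dcar Dadd Dzero using abelian_groupE(5)[OF agM] by (auto simp add: fun_eq_iff)
next
  fix x assume x: "x \<in> carrier (D k)"
  let ?y = "\<lambda>j. if j \<in> {k..k + int N - 1} then \<ominus>\<^bsub>M j\<^esub> x j else undefined"
  have "?y \<in> carrier (D k)" using x unfolding Dcar using abelian_group.a_inv_closed[OF agM] by simp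
  moreover have "?y \<oplus>\<^bsub>D k\<^esub> x = \<zero>\<^bsub>D k\<^esub>" using x unfolding Dcar Dadd Dzero
    using abelian_group.l_neg[OF agM] by (simp add: fun_eq_iff)
  ultimately show "\<exists>y\<in>carrier (D k). y \<oplus>\<^bsub>D k\<^esub> x = \<zero>\<^bsub>D k\<^esub>" by blast
qed

lemma Dneg: "x \<in> carrier (D k) \<Longrightarrow> \<ominus>\<^bsub>D k\<^esub> x = (\<lambda>j. if j \<in> {k..k + int N - 1} then \<ominus>\<^bsub>M j\<^esub> x j else undefined)"
proof -
  assume x: "x \<in> carrier (D k)"
  let ?y = "\<lambda>j. if j \<in> {k..k + int N - 1} then \<ominus>\<^bsub>M j\<^esub> x j else undefined"
  have "?y \<in> carrier (D k)" using x unfolding Dcar using abelian_group.a_inv_closed[OF agM] by simp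
  moreover have "?y \<oplus>\<^bsub>D k\<^esub> x = \<zero>\<^bsub>D k\<^esub>" using x unfolding Dcar Dadd Dzero
    using abelian_group.l_neg[OF agM] by (simp add: fun_eq_iff)
  ultimately show ?thesis using abelian_group.minus_equality[OF D_ag _ x] by blast
qed

lemma D_lm: "lmodule R (D k)"
  unfolding lmodule_def
proof (intro conjI ballI)
  show "ring R" using lmod_ring[OF lmM] .
  show "abelian_group (D k)" by (rule D_ag)
next
  fix a x assume "a \<in> carrier R" "x \<in> carrier (D k)"
  then show "a \<odot>\<^bsub>D k\<^esub> x \<in> carrier (D k)" unfolding Dcar Dsmult using lmod_smult_closed[OF lmM] by simp
next
  fix a b x assume "a \<in> carrier R" "b \<in> carrier R" "x \<in> carrier (D k)"
  then show "(a \<oplus>\<^bsub>R\<^esub> b) \<odot>\<^bsub>D k\<^esub> x = a \<odot>\<^bsub>D k\<^esub> x \<oplus>\<^bsub>D k\<^esub> b \<odot>\<^bsub>D k\<^esub> x"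
    unfolding Dcar Dsmult Dadd using lmM unfolding lmodule_def by (simp add: fun_eq_iff)
next
  fix a x y assume "a \<in> carrier R" "x \<in> carrier (D k)" "y \<in> carrier (D k)"
  then show "a \<odot>\<^bsub>D k\<^esub> (x \<oplus>\<^bsub>D k\<^esub> y) = a \<odot>\<^bsub>D k\<^esub> x \<oplus>\<^bsub>D k\<^esub> a \<odot>\<^bsub>D k\<^esub> y"
    unfolding Dcar Dsmult Dadd using lmM unfolding lmodule_def by (simp add: fun_eq_iff)
next
  fix a b x assume "a \<in> carrier R" "b \<in> carrier R" "x \<in> carrier (D k)"
  then show "(a \<otimes>\<^bsub>R\<^esub> b) \<odot>\<^bsub>D k\<^esub> x = a \<odot>\<^bsub>D k\<^esub> (b \<odot>\<^bsub>D k\<^esub> x)"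
    unfolding Dcar Dsmult using lmM unfolding lmodule_def by (simp add: fun_eq_iff)
next
  fix x assume "x \<in> carrier (D k)"
  then show "\<one>\<^bsub>R\<^esub> \<odot>\<^bsub>D k\<^esub> x = x"
    unfolding Dcar Dsmult using lmM unfolding lmodule_def by (auto simp add: fun_eq_iff)
qed

lemma Dfinsum:
  assumes "finite I" "F \<in> I \<rightarrow> carrier (D k)" "j \<in> {k..k + int N - 1}"
  shows "finsum (D k) F I j = finsum (M j) (\<lambda>i. F i j) I"
  using assms(1,2)
proof (induction I rule: finite_induct)
  case empty
  show ?case using assms(3) by (simp add: abelian_monoid.finsum_empty[OF abelian_group.axioms(1)[OF D_ag]]
     abelian_monoid.finsum_empty[OF abelian_group.axioms(1)[OF agM]] Dzero)
next
  case (insert i I)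
  have F: "F \<in> I \<rightarrow> carrier (D k)" "F i \<in> carrier (D k)" using insert by auto
  have Fj: "(\<lambda>i. F i j) \<in> I \<rightarrow> carrier (M j)" "F i j \<in> carrier (M j)" using F assms(3) unfolding Dcar Pi_def by auto
  have "finsum (D k) F (insert i I) = F i \<oplus>\<^bsub>D k\<^esub> finsum (D k) F I"
    using abelian_monoid.finsum_insert[OF abelian_group.axioms(1)[OF D_ag] insert(1,2) F] .
  then have "finsum (D k) F (insert i I) j = F i j \<oplus>\<^bsub>M j\<^esub> finsum (D k) F I j"
    using assms(3) by (simp add: Dadd)
  also have "\<dots> = finsum (M j) (\<lambda>i. F i j) (insert i I)"
    using abelian_monoid.finsum_insert[OF abelian_group.axioms(1)[OF agM] insert(1,2) Fj] insert(3)[OF F(1)] by simp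
  finally show ?case .
qed

lemma dd_lin: "lin_map R (D k) (D (k - 1)) (dd k)"
  unfolding lin_map_def
proof (intro conjI ballI)
  fix x assume "x \<in> carrier (D k)"
  then show "dd k x \<in> carrier (D (k - 1))" unfolding Dcar disk_diff_def
    using abelian_groupE(2)[OF agM] N2 by auto
next
  fix x y assume "x \<in> carrier (D k)" "y \<in> carrier (D k)"
  then show "dd k (x \<oplus>\<^bsub>D k\<^esub> y) = dd k x \<oplus>\<^bsub>D (k - 1)\<^esub> dd k y"
    unfolding Dcar disk_diff_def Dadd
    using abelian_groupE(2,5)[OF agM] N2 by (auto simp add: fun_eq_iff)
next
  fix a x assume "a \<in> carrier R" "x \<in> carrier (D k)"
  then show "dd k (a \<odot>\<^bsub>D k\<^esub> x) = a \<odot>\<^bsub>D (k - 1)\<^esub> dd k x"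
    unfolding Dcar disk_diff_def Dsmult
    using lmod_smult_zero[OF lmM] N2 by (auto simp add: fun_eq_iff)
qed

sublocale D: cx R D dd
  by unfold_locales (auto intro: D_lm dd_lin)

lemma D_dpow:
  assumes y: "y \<in> carrier (D k)"
  shows "t \<le> N \<Longrightarrow> dpow dd t k y = (\<lambda>j. if j \<in> {k..k + int N - 1 - int t} then y j
            else if j \<in> {k - int t..k - 1} then \<zero>\<^bsub>M j\<^esub> else undefined)"
proof (induction t)
  case 0
  show ?case using y unfolding Dcar by (auto simp: fun_eq_iff)
next
  case (Suc t)
  then have IH: "dpow dd t k y = (\<lambda>j. if j \<in> {k..k + int N - 1 - int t} then y j
            else if j \<in> {k - int t..k - 1} then \<zero>\<^bsub>M j\<^esub> else undefined)" by simp
  have "dpow dd (Suc t) k y = dd (k - int t) (dpow dd t k y)" by simp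
  also have "\<dots> = dd (k - int t) (\<lambda>j. if j \<in> {k..k + int N - 1 - int t} then y j
            else if j \<in> {k - int t..k - 1} then \<zero>\<^bsub>M j\<^esub> else undefined)" by (simp only: IH)
  finally show ?case unfolding disk_diff_def using Suc(2)
    by (auto simp: fun_eq_iff)
qed

definition sD :: "int \<Rightarrow> (int \<Rightarrow> 'b) \<Rightarrow> (int \<Rightarrow> 'b)" where
  "sD m y = (\<lambda>j. if j = m + int N - 1 then \<ominus>\<^bsub>M j\<^esub> y j
      else if j \<in> {m + int N - 1..m + int N - 1 + int N - 1} then \<zero>\<^bsub>M j\<^esub> else undefined)"

lemma sD_lin: "lin_map R (D m) (D (m + int N - 1)) (sD m)"
  unfolding lin_map_def
proof (intro conjI ballI)
  fix x assume "x \<in> carrier (D m)"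
  then show "sD m x \<in> carrier (D (m + int N - 1))" unfolding Dcar sD_def
    using abelian_groupE(2)[OF agM] abelian_group.a_inv_closed[OF agM] N2 by auto
next
  fix x y assume "x \<in> carrier (D m)" "y \<in> carrier (D m)"
  then show "sD m (x \<oplus>\<^bsub>D m\<^esub> y) = sD m x \<oplus>\<^bsub>D (m + int N - 1)\<^esub> sD m y"
    unfolding Dcar sD_def Dadd
    using abelian_groupE(2,5)[OF agM] abelian_group.minus_add[OF agM] N2 by (auto simp add: fun_eq_iff)
next
  fix a x assume "a \<in> carrier R" "x \<in> carrier (D m)"
  then show "sD m (a \<odot>\<^bsub>D m\<^esub> x) = a \<odot>\<^bsub>D (m + int N - 1)\<^esub> sD m x"
    unfolding Dcar sD_def Dsmult
    using lmod_smult_zero[OF lmM] lmod_smult_neg[OF lmM] N2 by (auto simp add: fun_eq_iff)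
qed

lemma D_term:
  assumes y: "y \<in> carrier (D n)" and i: "i < N"
  shows "dpow dd (N - 1 - i) (n - int i + int N - 1) (sD (n - int i) (dpow dd i n y)) =
    (\<lambda>j. if j = n + int N - 1 - int i then \<ominus>\<^bsub>M j\<^esub> y j else if j \<in> {n..n + int N - 1} then \<zero>\<^bsub>M j\<^esub> else undefined)"
proof -
  have w1: "dpow dd i n y \<in> carrier (D (n - int i))" using D.dpow_closed[OF y] by simp
  have w2: "sD (n - int i) (dpow dd i n y) \<in> carrier (D (n - int i + int N - 1))"
    using lin_mapD(1)[OF sD_lin w1] .
  have e1: "dpow dd i n y = (\<lambda>j. if j \<in> {n..n + int N - 1 - int i} then y j
            else if j \<in> {n - int i..n - 1} then \<zero>\<^bsub>M j\<^esub> else undefined)"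
    by (rule D_dpow[OF y]) (use i in simp)
  have e2: "dpow dd (N - 1 - i) (n - int i + int N - 1) (sD (n - int i) (dpow dd i n y)) =
     (\<lambda>j. if j \<in> {n - int i + int N - 1..n - int i + int N - 1 + int N - 1 - int (N - 1 - i)} then sD (n - int i) (dpow dd i n y) j
            else if j \<in> {n - int i + int N - 1 - int (N - 1 - i)..n - int i + int N - 1 - 1} then \<zero>\<^bsub>M j\<^esub> else undefined)"
    by (rule D_dpow[OF w2]) (use i in simp)
  show ?thesis
    unfolding e2 unfolding sD_def e1 using i by (auto simp: fun_eq_iff of_nat_diff)
qed

lemma D_contr:
  assumes y: "y \<in> carrier (D n)"
  shows "finsum (D n) (\<lambda>i. dpow dd (N - 1 - i) (n - int i + int N - 1) (sD (n - int i) (dpow dd i n y))) {0..<N}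
     = \<ominus>\<^bsub>D n\<^esub> y"
proof -
  let ?T = "\<lambda>i. dpow dd (N - 1 - i) (n - int i + int N - 1) (sD (n - int i) (dpow dd i n y))"
  have Tc: "?T \<in> {0..<N} \<rightarrow> carrier (D n)"
  proof
    fix i assume "i \<in> {0..<N}"
    then have i: "i < N" by simp
    have w1: "dpow dd i n y \<in> carrier (D (n - int i))" using D.dpow_closed[OF y] by simp
    have w2: "sD (n - int i) (dpow dd i n y) \<in> carrier (D (n - int i + int N - 1))"
      using lin_mapD(1)[OF sD_lin w1] .
    show "?T i \<in> carrier (D n)" by (rule D.dpow_closed[OF w2]) (use i in \<open>simp add: of_nat_diff\<close>)
  qed
  have nc: "\<ominus>\<^bsub>D n\<^esub> y \<in> carrier (D n)" using abelian_group.a_inv_closed[OF D_ag y] .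
  show ?thesis
  proof (rule Dext[OF abelian_monoid.finsum_closed[OF abelian_group.axioms(1)[OF D_ag] Tc] nc])
    fix j assume j: "j \<in> {n..n + int N - 1}"
    have "finsum (D n) ?T {0..<N} j = finsum (M j) (\<lambda>i. ?T i j) {0..<N}"
      using Dfinsum[OF _ Tc j] by simp
    also have "\<dots> = ?T (nat (n + int N - 1 - j)) j"
    proof (rule finsum_single[OF agM])
      show "nat (n + int N - 1 - j) \<in> {0..<N}" using j by auto
      show "(\<lambda>i. ?T i j) \<in> {0..<N} \<rightarrow> carrier (M j)" using Tc j unfolding Pi_def Dcar by blast
      fix i assume a: "i \<in> {0..<N}" "i \<noteq> nat (n + int N - 1 - j)"
      then have i: "i < N" by simp
      have e: "?T i j = (if j = n + int N - 1 - int i then \<ominus>\<^bsub>M j\<^esub> y j else if j \<in> {n..n + int N - 1} then \<zero>\<^bsub>M j\<^esub> else undefined)"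
        unfolding D_term[OF y i] ..
      show "?T i j = \<zero>\<^bsub>M j\<^esub>" unfolding e using a j by auto
    qed simp
    also have "\<dots> = \<ominus>\<^bsub>M j\<^esub> y j"
    proof -
      have i0: "nat (n + int N - 1 - j) < N" using j by auto
      show ?thesis unfolding D_term[OF y i0] using j by auto
    qed
    also have "\<dots> = (\<ominus>\<^bsub>D n\<^esub> y) j" using j by (simp add: Dneg[OF y])
    finally show "finsum (D n) ?T {0..<N} j = (\<ominus>\<^bsub>D n\<^esub> y) j" .
  qed
qed

end



lemma ncomplex_ncx: "ncomplex R N C d \<Longrightarrow> ncx R C d N"
  unfolding ncomplex_def by unfold_locales auto

lemma contractible_of_iso:
  fixes C :: "int \<Rightarrow> ('a, 'b, 'm) module_scheme" and M :: "int \<Rightarrow> ('a, 'c, 'e) module_scheme"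
  assumes N2: "N \<ge> 2" and nc: "ncomplex R N C d" and lmM: "\<And>n. lmodule R (M n)"
    and iso: "ncomplex_iso R C d (disk_deg N M) (disk_diff N M)"
  shows "contractible R N C d"
proof -
  interpret dsk R N M using lmM N2 by unfold_locales auto
  interpret C: ncx R C d N using ncomplex_ncx[OF nc] .
  obtain f where f: "chain_map R C d D dd f" and fb: "\<And>n. bij_betw (f n) (carrier (C n)) (carrier (D n))"
    using iso unfolding ncomplex_iso_def by blast
  define g where "g = (\<lambda>n. inv_into (carrier (C n)) (f n))"
  have g: "chain_map R D dd C d g" and gb: "\<And>n. bij_betw (g n) (carrier (D n)) (carrier (C n))"
    unfolding g_def using chain_iso_inv[OF C.lm D_lm f fb C.dcl D.dcl] by auto
  have fl: "lin_map R (C n) (D n) (f n)" for n using f unfolding chain_map_def by blast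
  have gl: "lin_map R (D n) (C n) (g n)" for n using g unfolding chain_map_def by blast
  have gf: "g n (f n x) = x" if "x \<in> carrier (C n)" for n x
    unfolding g_def using fb that by (simp add: bij_betw_def)
  define s where "s = (\<lambda>n x. g (n + int N - 1) (sD n (f n x)))"
  have sl: "lin_map R (C n) (C (n + int N - 1)) (s n)" for n
    unfolding s_def using lin_map_comp[OF lin_map_comp[OF fl sD_lin] gl] .
  have c1: "chain_map R C d C d (\<lambda>n x. x)" unfolding chain_map_def using lin_map_id[OF C.lm] by simp
  have c2: "chain_map R C d C d (\<lambda>n x. \<zero>\<^bsub>C n\<^esub>)" unfolding chain_map_def
      using lin_map_zero_map[OF C.lm C.lm] lin_map_zero[OF C.ag C.ag C.dl] by simp
  have fm: "\<zero>\<^bsub>C n\<^esub> \<ominus>\<^bsub>C n\<^esub> x = finsum (C n)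
         (\<lambda>i. dpow d (N - 1 - i) (n - int i + int N - 1) (s (n - int i) (dpow d i n x))) {0..<N}"
    if x: "x \<in> carrier (C n)" for n x
  proof -
    let ?y = "f n x"
    have y: "?y \<in> carrier (D n)" using lin_mapD(1)[OF fl x] .
    let ?T = "\<lambda>i. dpow dd (N - 1 - i) (n - int i + int N - 1) (sD (n - int i) (dpow dd i n ?y))"
    have Tc: "?T \<in> {0..<N} \<rightarrow> carrier (D n)"
    proof
      fix i assume "i \<in> {0..<N}"
      then have i: "i < N" by simp
      have w1: "dpow dd i n ?y \<in> carrier (D (n - int i))" using D.dpow_closed[OF y] by simp
      have w2: "sD (n - int i) (dpow dd i n ?y) \<in> carrier (D (n - int i + int N - 1))"
        using lin_mapD(1)[OF sD_lin w1] .
      show "?T i \<in> carrier (D n)" by (rule D.dpow_closed[OF w2]) (use i in \<open>simp add: of_nat_diff\<close>)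
    qed
    have gT: "(\<lambda>i. g n (?T i)) \<in> {0..<N} \<rightarrow> carrier (C n)" using Tc lin_mapD(1)[OF gl] by blast
    have pw: "dpow d (N - 1 - i) (n - int i + int N - 1) (s (n - int i) (dpow d i n x)) = g n (?T i)"
      if i: "i < N" for i
    proof -
      have e1: "f (n - int i) (dpow d i n x) = dpow dd i n ?y" using chain_map_dpow[OF f C.dcl x] .
      let ?p = "n - int i + int N - 1"
      have w1: "dpow dd i n ?y \<in> carrier (D (n - int i))" using D.dpow_closed[OF y] by simp
      have w2: "sD (n - int i) (dpow dd i n ?y) \<in> carrier (D ?p)"
        using lin_mapD(1)[OF sD_lin w1] .
      have e2: "g (?p - int (N - 1 - i)) (dpow dd (N - 1 - i) ?p (sD (n - int i) (dpow dd i n ?y)))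
          = dpow d (N - 1 - i) ?p (g ?p (sD (n - int i) (dpow dd i n ?y)))"
        using chain_map_dpow[OF g D.dcl w2] .
      have e3: "?p - int (N - 1 - i) = n" using i by (simp add: of_nat_diff)
      show "dpow d (N - 1 - i) ?p (s (n - int i) (dpow d i n x)) = g n (?T i)"
        unfolding s_def e1 using e2 unfolding e3 by simp
    qed
    have "finsum (C n) (\<lambda>i. dpow d (N - 1 - i) (n - int i + int N - 1) (s (n - int i) (dpow d i n x))) {0..<N}
        = finsum (C n) (\<lambda>i. g n (?T i)) {0..<N}"
    proof -
      interpret Cn: abelian_group "C n" by (rule C.ag)
      show ?thesis
        apply (rule Cn.finsum_cong)
        apply simp
        using gT pw apply (auto simp: Pi_def)[1]
        using pw by (simp add: simp_implies_def)
    qed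
    also have "\<dots> = g n (finsum (D n) ?T {0..<N})"
      using lin_map_finsum[OF D_ag C.ag gl _ Tc] by simp
    also have "\<dots> = g n (\<ominus>\<^bsub>D n\<^esub> ?y)" using D_contr[OF y] by simp
    also have "\<dots> = \<ominus>\<^bsub>C n\<^esub> x" using lin_map_neg[OF D_ag C.ag gl y] gf[OF x] by simp
    also have "\<dots> = \<zero>\<^bsub>C n\<^esub> \<ominus>\<^bsub>C n\<^esub> x"
      using abelian_group.a_inv_closed[OF C.ag x] abelian_groupE(5)[OF C.ag] by (simp add: a_minus_def)
    finally show ?thesis by simp
  qed
  show ?thesis unfolding contractible_def chain_homotopic_def using c1 c2 sl fm by blast
qed



lemma lmodule_sub:
  assumes M: "lmodule R M" and sub: "carrier K \<subseteq> carrier M" and z: "\<zero>\<^bsub>M\<^esub> \<in> carrier K"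
    and a: "\<And>x y. x \<in> carrier K \<Longrightarrow> y \<in> carrier K \<Longrightarrow> x \<oplus>\<^bsub>M\<^esub> y \<in> carrier K"
    and sm: "\<And>a x. a \<in> carrier R \<Longrightarrow> x \<in> carrier K \<Longrightarrow> a \<odot>\<^bsub>M\<^esub> x \<in> carrier K"
    and ng: "\<And>x. x \<in> carrier K \<Longrightarrow> \<ominus>\<^bsub>M\<^esub> x \<in> carrier K"
    and ea: "add K = add M" and ez: "zero K = zero M" and es: "smult K = smult M"
  shows "lmodule R K"
proof -
  interpret M: abelian_group M using lmod_ag[OF M] .
  have ag: "abelian_group K"
  proof (rule abelian_groupI)
    fix x y assume "x \<in> carrier K" "y \<in> carrier K" then show "x \<oplus>\<^bsub>K\<^esub> y \<in> carrier K" using a ea by simp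
  next
    show "\<zero>\<^bsub>K\<^esub> \<in> carrier K" using z ez by simp
  next
    fix x y z assume "x \<in> carrier K" "y \<in> carrier K" "z \<in> carrier K"
    then show "x \<oplus>\<^bsub>K\<^esub> y \<oplus>\<^bsub>K\<^esub> z = x \<oplus>\<^bsub>K\<^esub> (y \<oplus>\<^bsub>K\<^esub> z)" using ea sub M.a_assoc[of x y z] by auto
  next
    fix x y assume "x \<in> carrier K" "y \<in> carrier K"
    then show "x \<oplus>\<^bsub>K\<^esub> y = y \<oplus>\<^bsub>K\<^esub> x" using ea sub M.a_comm[of x y] by auto
  next
    fix x assume "x \<in> carrier K" then show "\<zero>\<^bsub>K\<^esub> \<oplus>\<^bsub>K\<^esub> x = x" using ea ez sub by auto
  next
    fix x assume x: "x \<in> carrier K"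
    then have "\<ominus>\<^bsub>M\<^esub> x \<oplus>\<^bsub>K\<^esub> x = \<zero>\<^bsub>K\<^esub>" using ea ez sub M.l_neg by auto
    then show "\<exists>y\<in>carrier K. y \<oplus>\<^bsub>K\<^esub> x = \<zero>\<^bsub>K\<^esub>" using ng[OF x] by blast
  qed
  show ?thesis unfolding lmodule_def
  proof (intro conjI ballI)
    show "ring R" using lmod_ring[OF M] .
    show "abelian_group K" by (rule ag)
  next
    fix a x assume "a \<in> carrier R" "x \<in> carrier K" then show "a \<odot>\<^bsub>K\<^esub> x \<in> carrier K" using sm es by simp
  next
    fix a b x assume "a \<in> carrier R" "b \<in> carrier R" "x \<in> carrier K"
    then show "(a \<oplus>\<^bsub>R\<^esub> b) \<odot>\<^bsub>K\<^esub> x = a \<odot>\<^bsub>K\<^esub> x \<oplus>\<^bsub>K\<^esub> b \<odot>\<^bsub>K\<^esub> x"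
      using M sub es ea unfolding lmodule_def by auto
  next
    fix a x y assume "a \<in> carrier R" "x \<in> carrier K" "y \<in> carrier K"
    then show "a \<odot>\<^bsub>K\<^esub> (x \<oplus>\<^bsub>K\<^esub> y) = a \<odot>\<^bsub>K\<^esub> x \<oplus>\<^bsub>K\<^esub> a \<odot>\<^bsub>K\<^esub> y"
      using lmod_smult_add[OF M, of a x y] sub es ea by auto
  next
    fix a b x assume "a \<in> carrier R" "b \<in> carrier R" "x \<in> carrier K"
    then show "(a \<otimes>\<^bsub>R\<^esub> b) \<odot>\<^bsub>K\<^esub> x = a \<odot>\<^bsub>K\<^esub> (b \<odot>\<^bsub>K\<^esub> x)"
      using M sub es unfolding lmodule_def by auto
  next
    fix x assume "x \<in> carrier K"
    then show "\<one>\<^bsub>R\<^esub> \<odot>\<^bsub>K\<^esub> x = x" using M sub es unfolding lmodule_def by auto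
  qed
qed

locale ctr = ncx R X d N for R :: "('a, 'r) ring_scheme" and X :: "int \<Rightarrow> ('a, 'b, 'm) module_scheme" and d N +
  fixes s :: "int \<Rightarrow> 'b \<Rightarrow> 'b"
  assumes N2: "N \<ge> 2" and sl: "\<And>n. lin_map R (X n) (X (n + int N - 1)) (s n)"
    and H: "\<And>n x. x \<in> carrier (X n) \<Longrightarrow> \<zero>\<^bsub>X n\<^esub> \<ominus>\<^bsub>X n\<^esub> x =
        finsum (X n) (\<lambda>i. dpow d (N - 1 - i) (n - int i + int N - 1) (s (n - int i) (dpow d i n x))) {0..<N}"
begin

definition s' where "s' m w = \<ominus>\<^bsub>X (m + int N - 1)\<^esub> s m w"

lemma s'_lin: "q = m + int N - 1 \<Longrightarrow> lin_map R (X m) (X q) (s' m)"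
  unfolding s'_def using lin_map_negf[OF lm lm sl] by simp

lemma dpow_Z:
  assumes w: "w \<in> carrier (X m)" "d m w = \<zero>\<^bsub>X (m - 1)\<^esub>" and i: "0 < i" and p: "p = m - int i"
  shows "dpow d i m w = \<zero>\<^bsub>X p\<^esub>"
proof -
  obtain k where k: "i = Suc k" using i gr0_implies_Suc by blast
  have "dpow d i m w = dpow d k (m - 1) (d m w)" unfolding k dpow_Suc' ..
  also have "\<dots> = \<zero>\<^bsub>X p\<^esub>" unfolding w(2) by (rule dpow_zero) (use p k in simp)
  finally show ?thesis .
qed

lemma F1:
  assumes w: "w \<in> carrier (X m)" "d m w = \<zero>\<^bsub>X (m - 1)\<^esub>" and q: "q = m + int N - 1"
  shows "dpow d (N - 1) q (s' m w) = w"
proof -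
  let ?T = "\<lambda>i. dpow d (N - 1 - i) (m - int i + int N - 1) (s (m - int i) (dpow d i m w))"
  have Tc: "?T \<in> {0..<N} \<rightarrow> carrier (X m)"
  proof
    fix i assume "i \<in> {0..<N}"
    then have i: "i < N" by simp
    have "dpow d i m w \<in> carrier (X (m - int i))" using dpow_closed[OF w(1)] by simp
    then have "s (m - int i) (dpow d i m w) \<in> carrier (X (m - int i + int N - 1))" using lin_mapD(1)[OF sl] by blast
    then show "?T i \<in> carrier (X m)" by (rule dpow_closed) (use i in \<open>simp add: of_nat_diff\<close>)
  qed
  have "\<zero>\<^bsub>X m\<^esub> \<ominus>\<^bsub>X m\<^esub> w = finsum (X m) ?T {0..<N}" using H[OF w(1)] .
  also have "\<dots> = ?T 0"
  proof (rule finsum_single[OF ag _ _ Tc])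
    show "0 \<in> {0..<N}" using N2 by simp
    fix i assume i: "i \<in> {0..<N}" "i \<noteq> 0"
    have "dpow d i m w = \<zero>\<^bsub>X (m - int i)\<^esub>" using dpow_Z[OF w] i by simp
    then have "s (m - int i) (dpow d i m w) = \<zero>\<^bsub>X (m - int i + int N - 1)\<^esub>"
      using lin_map_zero[OF ag ag sl] by simp
    then show "?T i = \<zero>\<^bsub>X m\<^esub>" using dpow_zero i by (simp add: of_nat_diff)
  qed simp
  also have "\<dots> = dpow d (N - 1) q (s m w)" using q by simp
  finally have e: "\<zero>\<^bsub>X m\<^esub> \<ominus>\<^bsub>X m\<^esub> w = dpow d (N - 1) q (s m w)" .
  have sc: "s m w \<in> carrier (X q)" using lin_mapD(1)[OF sl w(1)] q by simp
  have "dpow d (N - 1) q (s' m w) = \<ominus>\<^bsub>X m\<^esub> dpow d (N - 1) q (s m w)"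
    unfolding s'_def using lin_map_neg[OF ag ag dpow_lin' sc] q N2 by (simp add: of_nat_diff)
  also have "\<dots> = w" unfolding e[symmetric] using w(1)
    by (simp add: a_minus_def abelian_group.minus_minus[OF ag] abelian_group.a_inv_closed[OF ag] abelian_groupE(5)[OF ag])
  finally show ?thesis .
qed

end



context ctr begin

lemma neg0: "\<ominus>\<^bsub>X n\<^esub> \<zero>\<^bsub>X n\<^esub> = \<zero>\<^bsub>X n\<^esub>"
proof -
  interpret abelian_group "X n" by (rule ag)
  show ?thesis using minus_equality[OF l_zero[OF zero_closed] zero_closed zero_closed] .

qed

definition Mc :: "int \<Rightarrow> ('a, 'b, 'm) module_scheme" where "Mc j = cycles1 X d (j - (int N - 1))"

lemma Mc_car: "carrier (Mc j) = {x \<in> carrier (X (j - (int N - 1))). d (j - (int N - 1)) x = \<zero>\<^bsub>X (j - (int N - 1) - 1)\<^esub>}"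
  and Mc_add: "add (Mc j) = add (X (j - (int N - 1)))"
  and Mc_zero: "zero (Mc j) = zero (X (j - (int N - 1)))"
  and Mc_smult: "smult (Mc j) = smult (X (j - (int N - 1)))"
  by (simp_all add: Mc_def cycles1_def)

lemma Mc_lm: "lmodule R (Mc j)"
proof -
  let ?m = "j - (int N - 1)"
  interpret A: abelian_group "X ?m" by (rule ag)
  interpret B: abelian_group "X (?m - 1)" by (rule ag)
  show ?thesis
  proof (rule lmodule_sub[OF lm[of ?m]])
    show "carrier (Mc j) \<subseteq> carrier (X ?m)" unfolding Mc_car by auto
    show "\<zero>\<^bsub>X ?m\<^esub> \<in> carrier (Mc j)" unfolding Mc_car using lin_map_zero[OF ag ag dl] by simp
    fix x y assume "x \<in> carrier (Mc j)" "y \<in> carrier (Mc j)"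
    then show "x \<oplus>\<^bsub>X ?m\<^esub> y \<in> carrier (Mc j)" unfolding Mc_car using lin_mapD(2)[OF dl] abelian_groupE(2,5)[OF ag] by simp
  next
    fix a x assume "a \<in> carrier R" "x \<in> carrier (Mc j)"
    then show "a \<odot>\<^bsub>X ?m\<^esub> x \<in> carrier (Mc j)" unfolding Mc_car
      using lin_mapD(3)[OF dl] lmod_smult_closed[OF lm] lmod_smult_zero[OF lm] by simp
  next
    fix x assume "x \<in> carrier (Mc j)"
    then show "\<ominus>\<^bsub>X ?m\<^esub> x \<in> carrier (Mc j)" unfolding Mc_car
      using lin_map_neg[OF ag ag dl] neg0 by simp
  qed (simp_all add: Mc_add Mc_zero Mc_smult)
qed

sublocale MD: dsk R N Mc using Mc_lm N2 by unfold_locales auto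

abbreviation "DD \<equiv> disk_deg N Mc"
abbreviation "ddd \<equiv> disk_diff N Mc"

definition L :: "int \<Rightarrow> nat \<Rightarrow> 'b \<Rightarrow> 'b" where
  "L k i w = dpow d i (k + int i) (s' (k + int i - (int N - 1)) w)"

lemma L_lin: "lin_map R (X (k + int i - (int N - 1))) (X k) (L k i)"
  unfolding L_def by (rule lin_map_comp[OF s'_lin dpow_lin']) simp_all

lemma zc: "z \<in> carrier (DD k) \<Longrightarrow> i < N \<Longrightarrow> z (k + int i) \<in> carrier (X (k + int i - (int N - 1)))
    \<and> d (k + int i - (int N - 1)) (z (k + int i)) = \<zero>\<^bsub>X (k + int i - (int N - 1) - 1)\<^esub>"
proof -
  assume z: "z \<in> carrier (DD k)" and i: "i < N"
  have "k + int i \<in> {k..k + int N - 1}" using i by auto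
  then have "z (k + int i) \<in> carrier (Mc (k + int i))" using z unfolding MD.Dcar by blast
  then show ?thesis unfolding Mc_car by blast
qed

definition psi :: "int \<Rightarrow> (int \<Rightarrow> 'b) \<Rightarrow> 'b" where
  "psi k z = finsum (X k) (\<lambda>i. L k i (z (k + int i))) {0..<N}"

lemma psi_terms: "z \<in> carrier (DD k) \<Longrightarrow> (\<lambda>i. L k i (z (k + int i))) \<in> {0..<N} \<rightarrow> carrier (X k)"
  using lin_mapD(1)[OF L_lin] zc by auto

lemma psi_closed: "z \<in> carrier (DD k) \<Longrightarrow> psi k z \<in> carrier (X k)"
  unfolding psi_def using abelian_monoid.finsum_closed[OF abelian_group.axioms(1)[OF ag] psi_terms] .

lemma psi_lin: "lin_map R (DD k) (X k) (psi k)"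
  unfolding lin_map_def
proof (intro conjI ballI)
  interpret Xk: abelian_group "X k" by (rule ag)
  fix z assume "z \<in> carrier (DD k)" then show "psi k z \<in> carrier (X k)" by (rule psi_closed)
next
  interpret Xk: abelian_group "X k" by (rule ag)
  fix z z' assume z: "z \<in> carrier (DD k)" "z' \<in> carrier (DD k)"
  have "psi k (z \<oplus>\<^bsub>DD k\<^esub> z') = finsum (X k) (\<lambda>i. L k i (z (k + int i)) \<oplus>\<^bsub>X k\<^esub> L k i (z' (k + int i))) {0..<N}"
    unfolding psi_def
  proof (rule Xk.finsum_cong')
    show "(\<lambda>i. L k i (z (k + int i)) \<oplus>\<^bsub>X k\<^esub> L k i (z' (k + int i))) \<in> {0..<N} \<rightarrow> carrier (X k)"
      using psi_terms[OF z(1)] psi_terms[OF z(2)] by auto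
    fix i assume "i \<in> {0..<N}"
    then have i: "i < N" by simp
    have "(z \<oplus>\<^bsub>DD k\<^esub> z') (k + int i) = z (k + int i) \<oplus>\<^bsub>X (k + int i - (int N - 1))\<^esub> z' (k + int i)"
      using i by (simp add: MD.Dadd Mc_add)
    then show "L k i ((z \<oplus>\<^bsub>DD k\<^esub> z') (k + int i)) = L k i (z (k + int i)) \<oplus>\<^bsub>X k\<^esub> L k i (z' (k + int i))"
      using lin_mapD(2)[OF L_lin] zc[OF z(1) i] zc[OF z(2) i] by simp
  qed simp
  also have "\<dots> = psi k z \<oplus>\<^bsub>X k\<^esub> psi k z'"
    unfolding psi_def using Xk.finsum_addf[OF psi_terms[OF z(1)] psi_terms[OF z(2)]] .
  finally show "psi k (z \<oplus>\<^bsub>DD k\<^esub> z') = psi k z \<oplus>\<^bsub>X k\<^esub> psi k z'" .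
next
  interpret Xk: abelian_group "X k" by (rule ag)
  fix a z assume az: "a \<in> carrier R" "z \<in> carrier (DD k)"
  have "psi k (a \<odot>\<^bsub>DD k\<^esub> z) = finsum (X k) (\<lambda>i. a \<odot>\<^bsub>X k\<^esub> L k i (z (k + int i))) {0..<N}"
    unfolding psi_def
  proof (rule Xk.finsum_cong')
    show "(\<lambda>i. a \<odot>\<^bsub>X k\<^esub> L k i (z (k + int i))) \<in> {0..<N} \<rightarrow> carrier (X k)"
      using psi_terms[OF az(2)] lmod_smult_closed[OF lm az(1)] by auto
    fix i assume "i \<in> {0..<N}"
    then have i: "i < N" by simp
    have "(a \<odot>\<^bsub>DD k\<^esub> z) (k + int i) = a \<odot>\<^bsub>X (k + int i - (int N - 1))\<^esub> z (k + int i)"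
      using i by (simp add: MD.Dsmult Mc_smult)
    then show "L k i ((a \<odot>\<^bsub>DD k\<^esub> z) (k + int i)) = a \<odot>\<^bsub>X k\<^esub> L k i (z (k + int i))"
      using lin_mapD(3)[OF L_lin az(1)] zc[OF az(2) i] by simp
  qed simp
  also have "\<dots> = a \<odot>\<^bsub>X k\<^esub> psi k z"
    unfolding psi_def using smult_finsum[OF lm az(1) _ psi_terms[OF az(2)]] by simp
  finally show "psi k (a \<odot>\<^bsub>DD k\<^esub> z) = a \<odot>\<^bsub>X k\<^esub> psi k z" .
qed

end



context ctr begin

lemma dcomp: "dpow d b k (dpow d a (k + int a) x) = dpow d (a + b) (k + int a) x"
  using dpow_add[of d a b "k + int a" x] by simp

lemma s'_closed: "w \<in> carrier (X m) \<Longrightarrow> q = m + int N - 1 \<Longrightarrow> s' m w \<in> carrier (X q)"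
  using lin_mapD(1)[OF s'_lin] by blast

lemma psi_chain:
  assumes z: "z \<in> carrier (DD k)"
  shows "psi (k - 1) (ddd k z) = d k (psi k z)"
proof -
  obtain N0 where N0: "N = Suc (Suc N0)" using N2 by (metis add_2_eq_Suc le_Suc_ex)
  interpret Y: abelian_group "X (k - 1)" by (rule ag)
  have e0: "{0..<N} = {..Suc N0}" using N0 by auto
  define A where "A i = d k (L k i (z (k + int i)))" for i
  define B where "B i = L (k - 1) i (ddd k z (k - 1 + int i))" for i
  have z': "ddd k z \<in> carrier (DD (k - 1))" using lin_mapD(1)[OF MD.dd_lin z] .
  have Ac: "A \<in> {..Suc N0} \<rightarrow> carrier (X (k - 1))" unfolding A_def
    using psi_terms[OF z] e0 dcl by auto
  have Bc: "B \<in> {..Suc N0} \<rightarrow> carrier (X (k - 1))" unfolding B_def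
    using psi_terms[OF z'] e0 by auto
  have Ai: "A i = dpow d (Suc i) (k + int i) (s' (k + int i - (int N - 1)) (z (k + int i)))" for i
    unfolding A_def L_def by simp
  have A0: "A (Suc N0) = \<zero>\<^bsub>X (k - 1)\<^esub>"
  proof -
    have "z (k + int (Suc N0)) \<in> carrier (X (k + int (Suc N0) - (int N - 1)))"
      by (rule conjunct1[OF zc[OF z]]) (use N0 in simp)
    then have sc: "s' (k + int (Suc N0) - (int N - 1)) (z (k + int (Suc N0))) \<in> carrier (X (k + int (Suc N0)))"
      by (rule s'_closed) simp
    show ?thesis unfolding Ai by (rule dpow_ge[OF _ sc]) (use N0 in simp_all)
  qed
  have B0: "B 0 = \<zero>\<^bsub>X (k - 1)\<^esub>"
  proof -
    have "ddd k z (k - 1) = \<zero>\<^bsub>X (k - 1 - (int N - 1))\<^esub>" by (simp add: disk_diff_def Mc_zero)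
    then show ?thesis unfolding B_def using lin_map_zero[OF ag ag L_lin, of "k - 1" 0] by simp
  qed
  have BA: "B (Suc i) = A i" if i: "i \<in> {..N0}" for i
  proof -
    have e: "k - 1 + int (Suc i) = k + int i" by simp
    have "ddd k z (k + int i) = z (k + int i)" using i N0 by (simp add: disk_diff_def)
    then show ?thesis unfolding B_def e Ai L_def by simp
  qed
  have "d k (psi k z) = finsum (X (k - 1)) A {0..<N}"
    unfolding psi_def A_def using lin_map_finsum[OF ag ag dl _ psi_terms[OF z]] by simp
  also have "\<dots> = A (Suc N0) \<oplus>\<^bsub>X (k - 1)\<^esub> finsum (X (k - 1)) A {..N0}"
    unfolding e0 using Y.finsum_Suc[OF Ac] .
  also have "\<dots> = finsum (X (k - 1)) A {..N0}"
  proof -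
    have "A \<in> {..N0} \<rightarrow> carrier (X (k - 1))" using Ac by auto
    then show ?thesis using Y.l_zero[OF Y.finsum_closed[of A "{..N0}"]] A0 by simp
  qed
  also have "\<dots> = finsum (X (k - 1)) (\<lambda>i. B (Suc i)) {..N0}"
    by (rule Y.finsum_cong') (use BA Bc in auto)
  also have "\<dots> = finsum (X (k - 1)) (\<lambda>i. B (Suc i)) {..N0} \<oplus>\<^bsub>X (k - 1)\<^esub> B 0"
  proof -
    have "(\<lambda>i. B (Suc i)) \<in> {..N0} \<rightarrow> carrier (X (k - 1))" using Bc by auto
    then show ?thesis unfolding B0 using Y.r_zero[OF Y.finsum_closed[of "\<lambda>i. B (Suc i)" "{..N0}"]] by simp
  qed
  also have "\<dots> = finsum (X (k - 1)) B {0..<N}"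
    unfolding e0 using Y.finsum_Suc2[OF Bc] by simp
  also have "\<dots> = psi (k - 1) (ddd k z)" unfolding psi_def B_def by simp
  finally show ?thesis by simp
qed

end



context ctr begin

lemma L_zero: "L k i \<zero>\<^bsub>X (k + int i - (int N - 1))\<^esub> = \<zero>\<^bsub>X k\<^esub>"
  using lin_map_zero[OF ag ag L_lin] .

lemma dL: "dpow d b k (L k i w) = dpow d (i + b) (k + int i) (s' (k + int i - (int N - 1)) w)"
  unfolding L_def dcomp ..

lemma psi_kernel:
  assumes z: "z \<in> carrier (DD k)" and pz: "psi k z = \<zero>\<^bsub>X k\<^esub>"
  shows "z = \<zero>\<^bsub>DD k\<^esub>"
proof -
  have main: "u \<le> N \<Longrightarrow> \<forall>i<u. z (k + int i) = \<zero>\<^bsub>X (k + int i - (int N - 1))\<^esub>" for u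
  proof (induction u)
    case 0 then show ?case by simp
  next
    case (Suc u)
    then have u: "u < N" and IH: "\<forall>i<u. z (k + int i) = \<zero>\<^bsub>X (k + int i - (int N - 1))\<^esub>" by auto
    define p where "p = k + int u - (int N - 1)"
    define b where "b = N - 1 - u"
    have pb: "p = k - int b" unfolding p_def b_def using u by (simp add: of_nat_diff)
    let ?T = "\<lambda>i. dpow d b k (L k i (z (k + int i)))"
    have Tc: "?T \<in> {0..<N} \<rightarrow> carrier (X p)"
      using psi_terms[OF z] dpow_closed[OF _ pb] by blast
    have "\<zero>\<^bsub>X p\<^esub> = dpow d b k (psi k z)" unfolding pz by (rule dpow_zero[symmetric, OF pb])
    also have "\<dots> = finsum (X p) ?T {0..<N}"
      unfolding psi_def using lin_map_finsum[OF ag ag dpow_lin'[OF pb] _ psi_terms[OF z]] by simp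
    also have "\<dots> = ?T u"
    proof (rule finsum_single[OF ag _ _ Tc])
      show "u \<in> {0..<N}" using u by simp
      fix i assume i: "i \<in> {0..<N}" "i \<noteq> u"
      show "?T i = \<zero>\<^bsub>X p\<^esub>"
      proof (cases "i < u")
        case True
        then show ?thesis using IH dpow_zero[OF pb] lin_map_zero[OF ag ag L_lin, of k i] by simp
      next
        case False
        then have iu: "u < i" using i by simp
        have "z (k + int i) \<in> carrier (X (k + int i - (int N - 1)))" using zc[OF z] i by simp
        then have sc: "s' (k + int i - (int N - 1)) (z (k + int i)) \<in> carrier (X (k + int i))"
          by (rule s'_closed) simp
        show ?thesis unfolding dL by (rule dpow_ge[OF _ sc]) (use iu u pb in \<open>simp_all add: b_def\<close>)
      qed
    qed simp
    also have "\<dots> = z (k + int u)" unfolding dL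
    proof -
      have e: "u + b = N - 1" unfolding b_def using u by simp
      show "dpow d (u + b) (k + int u) (s' (k + int u - (int N - 1)) (z (k + int u))) = z (k + int u)"
        unfolding e by (rule F1) (use zc[OF z u] in simp_all)
    qed
    finally have "z (k + int u) = \<zero>\<^bsub>X (k + int u - (int N - 1))\<^esub>" unfolding p_def by simp
    then show ?case using IH less_Suc_eq by auto
  qed
  have zero: "\<zero>\<^bsub>DD k\<^esub> \<in> carrier (DD k)" using abelian_groupE(2)[OF MD.D_ag] .
  show ?thesis
  proof (rule MD.Dext[OF z zero])
    fix j assume j: "j \<in> {k..k + int N - 1}"
    define i where "i = nat (j - k)"
    have i: "j = k + int i" "i < N" using j unfolding i_def by auto
    show "z j = \<zero>\<^bsub>DD k\<^esub> j" using main[OF order_refl] i j by (simp add: MD.Dzero Mc_zero)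
  qed
qed

end



context ctr begin

lemma psi_inj: "inj_on (psi k) (carrier (DD k))"
proof (rule inj_onI)
  interpret Xk: abelian_group "X k" by (rule ag)
  interpret Dk: abelian_group "DD k" by (rule MD.D_ag)
  fix z z' assume z: "z \<in> carrier (DD k)" "z' \<in> carrier (DD k)" and e: "psi k z = psi k z'"
  have "psi k (z \<ominus>\<^bsub>DD k\<^esub> z') = \<zero>\<^bsub>X k\<^esub>"
    using lin_map_minus[OF MD.D_ag ag psi_lin z] e psi_closed[OF z(2)] Xk.r_neg by (simp add: a_minus_def)
  then have "z \<ominus>\<^bsub>DD k\<^esub> z' = \<zero>\<^bsub>DD k\<^esub>" by (rule psi_kernel[rotated]) (use z in simp)
  then have "z \<ominus>\<^bsub>DD k\<^esub> z' \<oplus>\<^bsub>DD k\<^esub> z' = z'" using z by simp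
  then show "z = z'" using z by (simp add: a_minus_def Dk.a_assoc Dk.l_neg)
qed

lemma psi_surj:
  "t \<le> N \<Longrightarrow> x \<in> carrier (X k) \<Longrightarrow> dpow d t k x = \<zero>\<^bsub>X (k - int t)\<^esub> \<Longrightarrow> x \<in> psi k ` carrier (DD k)"
proof (induction t arbitrary: x)
  case 0
  then have "x = \<zero>\<^bsub>X k\<^esub>" by simp
  moreover have "psi k \<zero>\<^bsub>DD k\<^esub> = \<zero>\<^bsub>X k\<^esub>" using lin_map_zero[OF MD.D_ag ag psi_lin] .
  ultimately show ?case using abelian_groupE(2)[OF MD.D_ag] by force
next
  case (Suc t x)
  interpret Xk: abelian_group "X k" by (rule ag)
  interpret Dk: abelian_group "DD k" by (rule MD.D_ag)
  have t: "t < N" using Suc by simp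
  have x: "x \<in> carrier (X k)" by fact
  define y where "y = dpow d t k x"
  have yc: "y \<in> carrier (X (k - int t))" unfolding y_def using dpow_closed[OF x] by simp
  have e1: "k - int (Suc t) = k - int t - 1" by simp
  have dy: "d (k - int t) y = \<zero>\<^bsub>X (k - int t - 1)\<^esub>" using Suc(4) unfolding y_def e1 by simp
  define u where "u = N - 1 - t"
  have u: "u < N" "u + t = N - 1" unfolding u_def using t by auto
  define j0 where "j0 = k + int u"
  have m0: "k + int u - (int N - 1) = k - int t" using u(2) t by (simp add: of_nat_diff)
  define z0 where "z0 = (\<lambda>j. if j = j0 then y else if j \<in> {k..k + int N - 1} then \<zero>\<^bsub>Mc j\<^esub> else undefined)"
  have ycM: "y \<in> carrier (Mc j0)" unfolding Mc_car j0_def m0 using yc dy by simp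
  have z0c: "z0 \<in> carrier (DD k)" unfolding MD.Dcar z0_def
    using ycM abelian_groupE(2)[OF MD.agM] u by (auto simp: j0_def)
  have ycu: "y \<in> carrier (X (k + int u - (int N - 1)))" unfolding m0 using yc .
  have Lc: "L k u y \<in> carrier (X k)" using lin_mapD(1)[OF L_lin ycu] .
  have pz0: "psi k z0 = L k u y"
  proof -
    have "psi k z0 = L k u (z0 (k + int u))" unfolding psi_def
    proof (rule finsum_single[OF ag _ _ psi_terms[OF z0c]])
      show "u \<in> {0..<N}" using u by simp
      fix i assume i: "i \<in> {0..<N}" "i \<noteq> u"
      then have "z0 (k + int i) = \<zero>\<^bsub>X (k + int i - (int N - 1))\<^esub>"
        unfolding z0_def j0_def by (simp add: Mc_zero)
      then show "L k i (z0 (k + int i)) = \<zero>\<^bsub>X k\<^esub>" using L_zero by simp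
    qed simp
    then show ?thesis unfolding z0_def j0_def by simp
  qed
  have dLy: "dpow d t k (L k u y) = y"
  proof -
    have "dpow d t k (L k u y) = dpow d (N - 1) (k + int u) (s' (k + int u - (int N - 1)) y)"
      unfolding dL u(2) ..
    also have "\<dots> = y" apply (rule F1) unfolding m0 using yc dy m0 by simp_all
    finally show ?thesis .
  qed
  define x' where "x' = x \<ominus>\<^bsub>X k\<^esub> L k u y"
  have x'c: "x' \<in> carrier (X k)" unfolding x'_def using x Lc by simp
  have "dpow d t k x' = y \<ominus>\<^bsub>X (k - int t)\<^esub> y"
    unfolding x'_def using lin_map_minus[OF ag ag dpow_lin x Lc] dLy y_def by simp
  also have "\<dots> = \<zero>\<^bsub>X (k - int t)\<^esub>" using abelian_group.r_neg[OF ag yc] by (simp add: a_minus_def)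
  finally have "x' \<in> psi k ` carrier (DD k)" using Suc.IH[OF _ x'c] t by simp
  then obtain z' where z': "z' \<in> carrier (DD k)" "psi k z' = x'" by blast
  have "psi k (z' \<oplus>\<^bsub>DD k\<^esub> z0) = x' \<oplus>\<^bsub>X k\<^esub> L k u y"
    using lin_mapD(2)[OF psi_lin z'(1) z0c] z'(2) pz0 by simp
  also have "\<dots> = x" unfolding x'_def using x Lc by (simp add: a_minus_def Xk.a_assoc Xk.l_neg)
  finally show ?case using z'(1) z0c by (metis Dk.a_closed image_eqI)
qed

lemma psi_bij: "bij_betw (psi k) (carrier (DD k)) (carrier (X k))"
  unfolding bij_betw_def
proof (intro conjI psi_inj equalityI subsetI)
  fix x assume "x \<in> psi k ` carrier (DD k)" then show "x \<in> carrier (X k)" using psi_closed by blast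
next
  fix x assume x: "x \<in> carrier (X k)"
  show "x \<in> psi k ` carrier (DD k)" by (rule psi_surj[OF order_refl x nil[OF x]])
qed

lemma psi_chain_map: "chain_map R DD ddd X d psi"
  unfolding chain_map_def using psi_lin psi_chain by simp

lemma iso_Mc: "ncomplex_iso R X d DD ddd"
proof -
  have "chain_map R X d DD ddd (\<lambda>n. inv_into (carrier (DD n)) (psi n))"
    and "\<And>n. bij_betw (inv_into (carrier (DD n)) (psi n)) (carrier (X n)) (carrier (DD n))"
    using chain_iso_inv[OF MD.D_lm lm psi_chain_map psi_bij MD.D.dcl dcl] by auto
  then show ?thesis unfolding ncomplex_iso_def by blast
qed

end



lemma (in ctr) Mc_eq: "Mc = (\<lambda>n. cycles1 X d (n - (int N - 1)))"
  by (simp add: fun_eq_iff Mc_def)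

lemma contr_iso:
  assumes N2: "N \<ge> 2" and nc: "ncomplex R N C d" and c: "contractible R N C d"
  shows "ncomplex_iso R C d (disk_deg N (\<lambda>n. cycles1 C d (n - (int N - 1))))
                               (disk_diff N (\<lambda>n. cycles1 C d (n - (int N - 1))))"
    and "\<And>n. lmodule R (cycles1 C d (n - (int N - 1)))"
proof -
  interpret C: ncx R C d N using ncomplex_ncx[OF nc] .
  obtain s where sl: "\<And>n. lin_map R (C n) (C (n + int N - 1)) (s n)"
    and H: "\<And>n x. x \<in> carrier (C n) \<Longrightarrow> \<zero>\<^bsub>C n\<^esub> \<ominus>\<^bsub>C n\<^esub> x =
        finsum (C n) (\<lambda>i. dpow d (N - 1 - i) (n - int i + int N - 1) (s (n - int i) (dpow d i n x))) {0..<N}"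
    using c unfolding contractible_def chain_homotopic_def by auto
  interpret ct: ctr R C d N s using N2 sl H by unfold_locales auto
  show "ncomplex_iso R C d (disk_deg N (\<lambda>n. cycles1 C d (n - (int N - 1))))
                               (disk_diff N (\<lambda>n. cycles1 C d (n - (int N - 1))))"
    using ct.iso_Mc unfolding ct.Mc_eq .
  show "lmodule R (cycles1 C d (n - (int N - 1)))" for n using ct.Mc_lm unfolding ct.Mc_eq by simp
qed

theorem theorem3p3:
  fixes R :: "('a, 'r) ring_scheme" and N :: nat
    and C :: "int \<Rightarrow> ('a, 'b, 'm) module_scheme" and d :: "int \<Rightarrow> 'b \<Rightarrow> 'b"
  assumes "ring R" and "N \<ge> 2" and "ncomplex R N C d"
  shows "(contractible R N C d \<longleftrightarrow>
            (\<exists>M :: int \<Rightarrow> ('a, 'b) module. (\<forall>n. lmodule R (M n)) \<and>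
               ncomplex_iso R C d (disk_deg N M) (disk_diff N M)))
       \<and> (\<forall>M :: int \<Rightarrow> ('a, 'c) module. (\<forall>n. lmodule R (M n)) \<and>
               ncomplex_iso R C d (disk_deg N M) (disk_diff N M) \<longrightarrow> contractible R N C d)
       \<and> (contractible R N C d \<longrightarrow>
            ncomplex_iso R C d (disk_deg N (\<lambda>n. cycles1 C d (n - (int N - 1))))
                               (disk_diff N (\<lambda>n. cycles1 C d (n - (int N - 1)))))"
proof (intro conjI allI impI iffI)
  show "ncomplex_iso R C d (disk_deg N (\<lambda>n. cycles1 C d (n - (int N - 1))))
                               (disk_diff N (\<lambda>n. cycles1 C d (n - (int N - 1))))"
    if "contractible R N C d" using contr_iso(1)[OF assms(2,3) that] .
next
  fix M :: "int \<Rightarrow> ('a, 'c) module"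
  assume "(\<forall>n. lmodule R (M n)) \<and> ncomplex_iso R C d (disk_deg N M) (disk_diff N M)"
  then show "contractible R N C d" using contractible_of_iso[OF assms(2,3)] by blast
next
  assume "\<exists>M :: int \<Rightarrow> ('a, 'b) module. (\<forall>n. lmodule R (M n)) \<and>
               ncomplex_iso R C d (disk_deg N M) (disk_diff N M)"
  then show "contractible R N C d" using contractible_of_iso[OF assms(2,3)] by blast
next
  assume c: "contractible R N C d"
  let ?Mc = "\<lambda>n. cycles1 C d (n - (int N - 1))"
  define M' :: "int \<Rightarrow> ('a, 'b) module" where
    "M' n = \<lparr>carrier = carrier (?Mc n), mult = mult (?Mc n), one = one (?Mc n),
       zero = zero (?Mc n), add = add (?Mc n), smult = smult (?Mc n)\<rparr>" for n
  have lM: "lmodule R (M' n)" for n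
  proof (rule lmodule_sub[OF contr_iso(2)[OF assms(2,3) c, of n]])
    have ag: "abelian_group (?Mc n)" using lmod_ag[OF contr_iso(2)[OF assms(2,3) c]] .
    show "carrier (M' n) \<subseteq> carrier (?Mc n)" unfolding M'_def by simp
    show "\<zero>\<^bsub>?Mc n\<^esub> \<in> carrier (M' n)" unfolding M'_def using abelian_groupE(2)[OF ag] by simp
    show "x \<oplus>\<^bsub>?Mc n\<^esub> y \<in> carrier (M' n)" if "x \<in> carrier (M' n)" "y \<in> carrier (M' n)" for x y
      using that abelian_groupE(1)[OF ag] unfolding M'_def by simp
    show "a \<odot>\<^bsub>?Mc n\<^esub> x \<in> carrier (M' n)" if "a \<in> carrier R" "x \<in> carrier (M' n)" for a x
      using that lmod_smult_closed[OF contr_iso(2)[OF assms(2,3) c]] unfolding M'_def by simp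
    show "\<ominus>\<^bsub>?Mc n\<^esub> x \<in> carrier (M' n)" if "x \<in> carrier (M' n)" for x
      using that abelian_group.a_inv_closed[OF ag] unfolding M'_def by simp
  qed (simp_all add: M'_def)
  have e1: "disk_deg N M' = disk_deg N ?Mc" by (simp add: fun_eq_iff disk_deg_def M'_def)
  have e2: "disk_diff N M' = disk_diff N ?Mc" by (simp add: fun_eq_iff disk_diff_def M'_def)
  show "\<exists>M :: int \<Rightarrow> ('a, 'b) module. (\<forall>n. lmodule R (M n)) \<and>
               ncomplex_iso R C d (disk_deg N M) (disk_diff N M)"
    using lM contr_iso(1)[OF assms(2,3) c] unfolding e1[symmetric] e2[symmetric] by blast
qed



end
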